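(* For every integer $n\geqslant 2$, \[ f(n,2)\leqslant \min_{\substack{k,l,m\geqslant 0\\ k+l+m=n-2}}\{f(k,2)+f(l,2)+f(m,2)\}+\left[\frac{3n}{2}\right]. \]
   Context: A box in $\mathbb R^d$ is a set $[a_1,b_1]\times\cdots\times[a_d,b_d]$ with edges parallel to the coordinate axes. For a family $\mathscr B$ of boxes, $\nu(\mathscr B)$ is the maximal number of pairwise disjoint members, and $\tau(\mathscr B)$ is the minimal number of points in a set meeting every member. For $n\geqslant 1$, $f(n,d)$ is the supremum of $\tau(\mathscr B)$ over all families $\mathscr B$ of boxes in $\mathbb R^d$ with $\nu(\mathscr B)=n$, and $f(0,d)=0$ by convention. $[x]$ denotes the integer part of $x$; $k,l,m$ range over integers. *)

theory Defs
  imports "HOL-Analysis.Analysis" "HOL-Library.Extended_Nat"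
begin

definition is_box :: "'a::euclidean_space set \<Rightarrow> bool" where
  "is_box B \<longleftrightarrow> (\<exists>a b. (\<forall>i\<in>Basis. a \<bullet> i \<le> b \<bullet> i) \<and> B = cbox a b)"

definition nu :: "'a set set \<Rightarrow> enat" where
  "nu F = Sup {enat (card S) | S. S \<subseteq> F \<and> finite S \<and> pairwise disjnt S}"

definition tau :: "'a set set \<Rightarrow> enat" where
  "tau F = Inf {enat (card P) | P. finite P \<and> (\<forall>B\<in>F. P \<inter> B \<noteq> {})}"

text \<open>f(n,d) with d = DIM('a): supremum of tau over box families with nu = n; f(0,d) = 0.\<close>
definition f_box :: "'a::euclidean_space itself \<Rightarrow> nat \<Rightarrow> enat" where
  "f_box _ n = (if n = 0 then 0 else
     Sup {tau F | F :: 'a set set. (\<forall>B\<in>F. is_box B) \<and> nu F = enat n})"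

abbreviation f2 :: "nat \<Rightarrow> enat" where
  "f2 n \<equiv> f_box TYPE(real^2) n"

end

theory Submission
  imports Defs
begin


lemma nu_ge:
  assumes "S \<subseteq> F" "finite S" "pairwise disjnt S"
  shows "enat (card S) \<le> nu F"
  unfolding nu_def using assms by (auto intro!: Sup_upper)

lemma nu_le:
  assumes "\<And>S. S \<subseteq> F \<Longrightarrow> finite S \<Longrightarrow> pairwise disjnt S \<Longrightarrow> card S \<le> j"
  shows "nu F \<le> enat j"
  unfolding nu_def using assms by (auto intro!: Sup_least)

lemma nu_mono: "F \<subseteq> G \<Longrightarrow> nu F \<le> nu G"
  unfolding nu_def by (rule Sup_subset_mono) blast

lemma nu_attained:
  assumes "nu F = enat n"
  obtains S where "S \<subseteq> F" "finite S" "pairwise disjnt S" "card S = n"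
proof -
  let ?X = "{enat (card S) | S. S \<subseteq> F \<and> finite S \<and> pairwise disjnt S}"
  have "enat (card {}) \<in> ?X" by force
  hence ne: "?X \<noteq> {}" by blast
  have S: "Sup ?X = enat n" using assms unfolding nu_def .
  hence fin: "finite ?X" using ne by (auto simp: Sup_enat_def split: if_splits)
  have "Sup ?X = Max ?X" unfolding Sup_enat_def by (simp only: if_not_P[OF ne] if_P[OF fin])
  hence "Max ?X = enat n" using S by simp
  hence "enat n \<in> ?X" using Max_in[OF fin ne] by simp
  then show ?thesis using that by auto
qed

lemma tau_le:
  assumes "finite P" "\<And>B. B \<in> F \<Longrightarrow> P \<inter> B \<noteq> {}"
  shows "tau F \<le> enat (card P)"
  unfolding tau_def using assms by (auto intro!: Inf_lower)

lemma tau_attained: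
  assumes "tau F \<noteq> \<infinity>"
  obtains P where "finite P" "\<forall>B\<in>F. P \<inter> B \<noteq> {}" "tau F = enat (card P)"
proof -
  let ?X = "{enat (card P) | P. finite P \<and> (\<forall>B\<in>F. P \<inter> B \<noteq> {})}"
  have ne: "?X \<noteq> {}"
  proof
    assume e: "?X = {}"
    have "tau F = Inf ?X" unfolding tau_def ..
    also have "\<dots> = \<infinity>" by (subst e) (simp add: top_enat_def)
    finally show False using assms by simp
  qed
  then obtain x where "x \<in> ?X" by blast
  hence "(LEAST x. x \<in> ?X) \<in> ?X" by (rule LeastI)
  hence "tau F \<in> ?X" using ne unfolding tau_def Inf_enat_def by simp
  then show ?thesis using that by auto
qed

lemma tau_mono:
  assumes "F \<subseteq> G" shows "tau F \<le> tau G"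
proof (cases "tau G = \<infinity>")
  case True then show ?thesis by simp
next
  case False
  then obtain P where P: "finite P" "\<forall>B\<in>G. P \<inter> B \<noteq> {}" "tau G = enat (card P)"
    by (rule tau_attained)
  have "tau F \<le> enat (card P)" by (rule tau_le) (use P assms in auto)
  then show ?thesis using P by simp
qed

lemma tau_union: "tau (F \<union> G) \<le> tau F + tau G"
proof (cases "tau F = \<infinity> \<or> tau G = \<infinity>")
  case True then show ?thesis by auto
next
  case False
  then obtain P Q where P: "finite P" "\<forall>B\<in>F. P \<inter> B \<noteq> {}" "tau F = enat (card P)"
     and Q: "finite Q" "\<forall>B\<in>G. Q \<inter> B \<noteq> {}" "tau G = enat (card Q)"
    by (metis tau_attained)
  have "tau (F \<union> G) \<le> enat (card (P \<union> Q))" by (rule tau_le) (use P Q in auto)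
  also have "\<dots> \<le> enat (card P + card Q)" using card_Un_le[of P Q] by simp
  finally show ?thesis using P Q by simp
qed

lemma tau_empty: "tau {} = 0"
proof -
  have "tau {} \<le> enat 0" using tau_le[of "{}" "{}"] by simp
  thus ?thesis by (metis zero_enat_def le_zero_eq)
qed

lemma nu_insert: "nu (insert x G) \<le> nu G + 1"
  unfolding nu_def[of "insert x G"]
proof (rule Sup_least, clarify)
  fix S assume S: "S \<subseteq> insert x G" "finite S" "pairwise disjnt S"
  have a: "enat (card (S - {x})) \<le> nu G"
    by (rule nu_ge) (use S in \<open>auto intro: pairwise_subset\<close>)
  have "x \<in> S \<Longrightarrow> card S > 0" using S(2) card_gt_0_iff by blast
  hence "card S \<le> card (S - {x}) + 1" using S(2) by (cases "x \<in> S") (auto simp: card_Diff_singleton)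
  hence "enat (card S) \<le> enat (card (S - {x})) + 1" by (simp add: one_enat_def)
  also have "\<dots> \<le> nu G + 1" using a by (rule add_right_mono)
  finally show "enat (card S) \<le> nu G + 1" .
qed

lemma pairwise_disjnt_Un:
  assumes "pairwise disjnt S" "pairwise disjnt T" "\<forall>B\<in>S. \<forall>B'\<in>T. disjnt B B'"
  shows "pairwise disjnt (S \<union> T)"
  unfolding pairwise_def
proof (intro ballI impI)
  fix x y assume xy: "x \<in> S \<union> T" "y \<in> S \<union> T" "x \<noteq> y"
  show "disjnt x y"
  proof (cases "x \<in> S")
    case True
    show ?thesis
    proof (cases "y \<in> S")
      case True then show ?thesis using \<open>x \<in> S\<close> xy(3) assms(1) unfolding pairwise_def by blast
    next
      case False then have "y \<in> T" using xy by blast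
      then show ?thesis using \<open>x \<in> S\<close> assms(3) by blast
    qed
  next
    case False then have xT: "x \<in> T" using xy by blast
    show ?thesis
    proof (cases "y \<in> S")
      case True then have "disjnt y x" using xT assms(3) by blast
      then show ?thesis by (rule disjnt_sym)
    next
      case False then have "y \<in> T" using xy by blast
      then show ?thesis using xT xy(3) assms(2) unfolding pairwise_def by blast
    qed
  qed
qed

definition lohi :: "(real^2) set \<Rightarrow> (real^2) \<times> (real^2)" where
  "lohi B = (SOME p. (\<forall>i. fst p $ i \<le> snd p $ i) \<and> B = cbox (fst p) (snd p))"
definition lo :: "(real^2) set \<Rightarrow> real^2" where "lo B = fst (lohi B)"
definition hi :: "(real^2) set \<Rightarrow> real^2" where "hi B = snd (lohi B)"

lemma box_lohi:
  assumes "is_box B"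
  shows "\<forall>i. lo B $ i \<le> hi B $ i" "B = cbox (lo B) (hi B)"
proof -
  from assms obtain a b where ab: "\<forall>i\<in>Basis. a \<bullet> i \<le> b \<bullet> i" "B = cbox a b"
    unfolding is_box_def by blast
  have "cbox a b \<noteq> {}" using ab(1) by (simp add: box_ne_empty)
  then obtain x where "x \<in> cbox a b" by blast
  hence "\<forall>i. a$i \<le> b$i" by (auto simp: mem_box_cart intro: order_trans)
  hence ex: "\<exists>p. (\<forall>i. fst p $ i \<le> snd p $ i) \<and> B = cbox (fst p) (snd p)"
    using ab(2) by (intro exI[of _ "(a,b)"]) auto
  have sp: "(\<forall>i. fst (lohi B) $ i \<le> snd (lohi B) $ i) \<and> B = cbox (fst (lohi B)) (snd (lohi B))"
    unfolding lohi_def by (rule someI_ex[OF ex])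
  show "\<forall>i. lo B $ i \<le> hi B $ i" unfolding lo_def hi_def by (rule conjunct1[OF sp])
  show "B = cbox (lo B) (hi B)" unfolding lo_def hi_def by (rule conjunct2[OF sp])
qed

lemma mem_box:
  assumes "is_box B"
  shows "x \<in> B \<longleftrightarrow> (\<forall>i. lo B $ i \<le> x $ i \<and> x $ i \<le> hi B $ i)"
proof -
  obtain C where C: "C = cbox (lo B) (hi B)" by blast
  have BC: "B = C" by (rule trans[OF box_lohi(2)[OF assms] C[symmetric]])
  have "x \<in> B \<longleftrightarrow> x \<in> C" by (rule arg_cong[where f="\<lambda>S. x \<in> S"], rule BC)
  also have "x \<in> C \<longleftrightarrow> (\<forall>i. lo B $ i \<le> x $ i \<and> x $ i \<le> hi B $ i)"
    unfolding C by (rule mem_box_cart(2))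
  finally show ?thesis .
qed

lemma box_lo_in: "is_box B \<Longrightarrow> lo B \<in> B"
  using box_lohi(1)[of B] mem_box[of B "lo B"] by auto

lemma box_ne: "is_box (B::(real^2) set) \<Longrightarrow> B \<noteq> {}"
  by (metis box_lo_in empty_iff)

lemma box_disj:
  assumes "is_box B1" "is_box B2" "hi B1 $ i < lo B2 $ i"
  shows "disjnt B1 B2"
proof -
  have "x \<notin> B2" if "x \<in> B1" for x
  proof
    assume "x \<in> B2"
    have "x $ i \<le> hi B1 $ i" using that mem_box[OF assms(1)] by blast
    moreover have "lo B2 $ i \<le> x $ i" using \<open>x \<in> B2\<close> mem_box[OF assms(2)] by blast
    ultimately show False using assms(3) by linarith
  qed
  then show ?thesis unfolding disjnt_def by blast
qed

lemma box_meet_le: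
  assumes "is_box B1" "is_box B2" "B1 \<inter> B2 \<noteq> {}"
  shows "lo B1 $ i \<le> hi B2 $ i"
proof -
  obtain x where "x \<in> B1" "x \<in> B2" using assms(3) by blast
  then show ?thesis using mem_box[OF assms(1)] mem_box[OF assms(2)] by (meson order_trans)
qed

lemma helly:
  fixes F :: "(real^2) set set"
  assumes boxes: "\<forall>B\<in>F. is_box B" and ne: "F \<noteq> {}"
    and pw: "\<forall>B1\<in>F. \<forall>B2\<in>F. B1 \<inter> B2 \<noteq> {}"
  shows "\<exists>p. \<forall>B\<in>F. p \<in> B"
proof -
  define p :: "real^2" where "p = (\<chi> i. Sup ((\<lambda>B. lo B $ i) ` F))"
  have pi: "p $ i = Sup ((\<lambda>B. lo B $ i) ` F)" for i unfolding p_def by simp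
  have le: "lo B $ i \<le> hi B' $ i" if "B \<in> F" "B' \<in> F" for B B' i
  proof (rule box_meet_le)
    show "is_box B" using boxes that(1) by blast
    show "is_box B'" using boxes that(2) by blast
    show "B \<inter> B' \<noteq> {}" using pw that by blast
  qed
  obtain B0 where B0: "B0 \<in> F" using ne by blast
  have bdd: "bdd_above ((\<lambda>B. lo B $ i) ` F)" for i
    by (rule bdd_aboveI2[where M="hi B0 $ i"], rule le, assumption, rule B0)
  have "p \<in> B" if BF: "B \<in> F" for B
  proof -
    have "lo B $ i \<le> p $ i \<and> p $ i \<le> hi B $ i" for i
    proof
      show "lo B $ i \<le> p $ i" unfolding pi by (rule cSup_upper[OF imageI[OF BF] bdd])
      show "p $ i \<le> hi B $ i" unfolding pi
      proof (rule cSup_least)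
        show "(\<lambda>B. lo B $ i) ` F \<noteq> {}" using ne by blast
        fix x assume "x \<in> (\<lambda>B. lo B $ i) ` F"
        then obtain B' where "B' \<in> F" "x = lo B' $ i" by blast
        then show "x \<le> hi B $ i" using le[OF _ BF] by blast
      qed
    qed
    then show ?thesis using mem_box[of B p] boxes BF by blast
  qed
  then show ?thesis by blast
qed

lemma nu_zero_empty:
  fixes F :: "(real^2) set set"
  assumes "\<forall>B\<in>F. is_box B" "nu F \<le> 0"
  shows "F = {}"
proof (rule ccontr)
  assume "F \<noteq> {}"
  then obtain B where "B \<in> F" by blast
  hence "enat (card {B}) \<le> nu F" by (intro nu_ge) auto
  moreover have "nu F \<le> enat 0" using assms(2) by (simp add: zero_enat_def)
  ultimately have "enat (card {B}) \<le> enat 0" by (rule order_trans)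
  thus False by simp
qed

lemma tau_le1:
  fixes F :: "(real^2) set set"
  assumes boxes: "\<forall>B\<in>F. is_box B" and nu1: "nu F \<le> 1"
  shows "tau F \<le> 1"
proof (cases "F = {}")
  case True then show ?thesis by (simp add: tau_empty)
next
  case False
  have "B1 \<inter> B2 \<noteq> {}" if "B1 \<in> F" "B2 \<in> F" for B1 B2
  proof (cases "B1 = B2")
    case True then show ?thesis using box_ne boxes that by auto
  next
    case neq: False
    show ?thesis
    proof
      assume "B1 \<inter> B2 = {}"
      hence "enat (card {B1,B2}) \<le> nu F"
        by (intro nu_ge) (use that in \<open>auto simp: pairwise_def disjnt_def Int_commute\<close>)
      hence "enat (card {B1,B2}) \<le> 1" using nu1 by (rule order_trans)
      with neq show False by (simp add: one_enat_def)
    qed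
  qed
  then obtain p where "\<forall>B\<in>F. p \<in> B" using helly[OF boxes False] by blast
  then show ?thesis using tau_le[of "{p}" F] by (auto simp: one_enat_def)
qed



definition wall :: "real \<Rightarrow> (real^2) set \<Rightarrow> bool" where
  "wall a B \<longleftrightarrow> lo B $ 1 \<le> a \<and> a \<le> hi B $ 1"

lemma combine:
  fixes S T :: "(real^2) set set"
  assumes boxes: "\<forall>B\<in>G. is_box B" and ST: "S \<subseteq> G" "T \<subseteq> G" and fin: "finite S" "finite T"
    and pw: "pairwise disjnt S" "pairwise disjnt T" and cross: "\<forall>B\<in>S. \<forall>B'\<in>T. disjnt B B'"
  shows "enat (card S + card T) \<le> nu G"
proof -
  have "S \<inter> T = {}"
  proof (rule ccontr)
    assume "S \<inter> T \<noteq> {}" then obtain B where B: "B \<in> S" "B \<in> T" by blast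
    hence "disjnt B B" using cross by blast
    hence "B = {}" by (simp add: disjnt_def)
    moreover have "is_box B" using B(1) ST(1) boxes by blast
    ultimately show False using box_ne by blast
  qed
  hence c: "card (S \<union> T) = card S + card T" by (rule card_Un_disjoint[OF fin])
  have "enat (card (S \<union> T)) \<le> nu G"
  proof (rule nu_ge)
    show "S \<union> T \<subseteq> G" using ST by blast
    show "finite (S \<union> T)" using fin by blast
    show "pairwise disjnt (S \<union> T)" by (rule pairwise_disjnt_Un[OF pw cross])
  qed
  then show ?thesis using c by simp
qed

lemma pair_family:
  fixes B1 B2 :: "(real^2) set"
  assumes "is_box B1" "disjnt B1 B2"
  shows "pairwise disjnt {B1,B2}" "card {B1,B2} = 2"
proof -
  have "B1 \<noteq> B2"
  proof
    assume "B1 = B2"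
    hence "B1 = {}" using assms(2) by (simp add: disjnt_def)
    thus False using box_ne assms(1) by blast
  qed
  then show "card {B1,B2} = 2" by simp
  show "pairwise disjnt {B1,B2}" using assms(2) disjnt_sym[OF assms(2)] unfolding pairwise_def
    by blast
qed

lemma two_in:
  fixes K :: "'a set"
  assumes "finite K" "2 \<le> card K"
  obtains B1 B2 where "B1 \<in> K" "B2 \<in> K" "B1 \<noteq> B2"
proof -
  obtain T where T: "T \<subseteq> K" "card T = 2" using obtain_subset_with_card_n[OF assms(2)] by blast
  then obtain x y where "T = {x,y}" "x \<noteq> y" by (auto simp: card_2_iff)
  then show ?thesis using that T(1) by blast
qed

lemma two_wall:
  "\<forall>G::(real^2) set set. (\<forall>B\<in>G. is_box B \<and> (wall \<alpha> B \<or> wall \<beta> B)) \<longrightarrow> nu G \<le> enat n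
      \<longrightarrow> tau G \<le> enat (3 * n div 2)"
proof (induction n rule: less_induct)
  case (less n)
  show ?case
  proof (intro allI impI)
    fix G :: "(real^2) set set"
    assume hG: "\<forall>B\<in>G. is_box B \<and> (wall \<alpha> B \<or> wall \<beta> B)" and nuG: "nu G \<le> enat n"
    have boxes: "\<forall>B\<in>G. is_box B" using hG by blast
    show "tau G \<le> enat (3 * n div 2)"
    proof (cases "nu G \<le> 1")
      case True
      show ?thesis
      proof (cases "n = 0")
        case True
        hence "nu G \<le> 0" using nuG by (simp add: zero_enat_def)
        hence "G = {}" using nu_zero_empty[OF boxes] by blast
        thus ?thesis by (simp add: tau_empty)
      next
        case False
        hence n1: "1 \<le> 3 * n div 2" by simp
        have "tau G \<le> 1" by (rule tau_le1[OF boxes True])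
        also have "1 \<le> enat (3*n div 2)" using n1 by (simp add: one_enat_def)
        finally show ?thesis .
      qed
    next
      case False
      obtain n' where n': "nu G = enat n'" using enat_ile[OF nuG] by blast
      have n'n: "n' \<le> n" using nuG n' by simp
      obtain K where K: "K \<subseteq> G" "finite K" "pairwise disjnt K" "card K = n'"
        using nu_attained[OF n'] by blast
      have n'2: "2 \<le> n'" using False n' by (simp add: one_enat_def)
      hence Kne: "K \<noteq> {}" using K(4) by auto
      define Y where "Y = {y. \<exists>B1\<in>G. \<exists>B2\<in>G. disjnt B1 B2 \<and> hi B1 $ 2 \<le> y \<and> hi B2 $ 2 \<le> y}"
      have key: "card S + 2 \<le> n'" if S: "S \<subseteq> G" "finite S" "pairwise disjnt S"
        and y: "y \<in> Y" and sep: "\<forall>B\<in>S. y < lo B $ 2" for S y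
      proof -
        from y obtain B1 B2 where B: "B1 \<in> G" "B2 \<in> G" "disjnt B1 B2" "hi B1 $ 2 \<le> y" "hi B2 $ 2 \<le> y"
          unfolding Y_def by blast
        have b1: "is_box B1" using B(1) boxes by blast
        have P: "pairwise disjnt {B1,B2}" "card {B1,B2} = 2" using pair_family[OF b1 B(3)] by auto
        have cross: "\<forall>B\<in>S. \<forall>B'\<in>{B1,B2}. disjnt B B'"
        proof (intro ballI)
          fix B B' assume BS: "B \<in> S" and B': "B' \<in> {B1,B2}"
          have "B' \<in> G" using B' B by blast
          hence "is_box B'" using boxes by blast
          moreover have "is_box B" using BS S(1) boxes by blast
          moreover have "hi B' $ 2 < lo B $ 2"
          proof -
            have "hi B' $ 2 \<le> y" using B' B(4,5) by auto
            moreover have "y < lo B $ 2" using sep BS by blast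
            ultimately show ?thesis by linarith
          qed
          ultimately have "disjnt B' B" by (rule box_disj)
          then show "disjnt B B'" by (rule disjnt_sym)
        qed
        have "enat (card S + card {B1,B2}) \<le> nu G"
          by (rule combine[OF boxes S(1) _ S(2) _ S(3) P(1) cross]) (use B in auto)
        thus ?thesis using n' P(2) by simp
      qed
      have Ymem: "max (hi C1 $ 2) (hi C2 $ 2) \<in> Y" if "C1 \<in> G" "C2 \<in> G" "disjnt C1 C2" for C1 C2
      proof -
        have "\<exists>B1\<in>G. \<exists>B2\<in>G. disjnt B1 B2 \<and> hi B1 $ 2 \<le> max (hi C1 $ 2) (hi C2 $ 2)
                 \<and> hi B2 $ 2 \<le> max (hi C1 $ 2) (hi C2 $ 2)"
          using that by (intro bexI[of _ C1] bexI[of _ C2]) auto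
        then show ?thesis unfolding Y_def by simp
      qed
      have "2 \<le> card K" using n'2 K(4) by simp
      then obtain B1 B2 where B12: "B1 \<in> K" "B2 \<in> K" "B1 \<noteq> B2"
        using two_in[OF K(2)] by blast
      have "disjnt B1 B2" using K(3) B12 unfolding pairwise_def by blast
      hence "max (hi B1 $ 2) (hi B2 $ 2) \<in> Y" using Ymem B12 K(1) by blast
      hence Yne: "Y \<noteq> {}" by blast
      define y0 where "y0 = Min ((\<lambda>B. lo B $ 2) ` K)"
      have y0le: "y0 \<le> y" if "y \<in> Y" for y
      proof (rule ccontr)
        assume "\<not> y0 \<le> y"
        hence "y < y0" by simp
        hence "\<forall>B\<in>K. y < lo B $ 2" unfolding y0_def using K(2) Kne by (simp add: Min_gr_iff)
        hence "card K + 2 \<le> n'" using key[OF K(1-3) that] by blast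
        thus False using K(4) by simp
      qed
      have bdd: "bdd_below Y" by (rule bdd_belowI[of _ y0], rule y0le)
      define \<delta> where "\<delta> = Inf Y"
      have \<delta>le: "\<delta> \<le> y" if "y \<in> Y" for y unfolding \<delta>_def by (rule cInf_lower[OF that bdd])
      define Below where "Below = {B\<in>G. hi B $ 2 < \<delta>}"
      define Mid where "Mid = {B\<in>G. lo B $ 2 \<le> \<delta> \<and> \<delta> \<le> hi B $ 2}"
      define Above where "Above = {B\<in>G. \<delta> < lo B $ 2}"
      have nuB: "nu Below \<le> enat 1"
      proof (rule nu_le)
        fix S assume S: "S \<subseteq> Below" "finite S" "pairwise disjnt S"
        show "card S \<le> 1"
        proof (rule ccontr)
          assume "\<not> card S \<le> 1"
          hence "2 \<le> card S" by simp
          then obtain C1 C2 where C: "C1 \<in> S" "C2 \<in> S" "C1 \<noteq> C2" using two_in[OF S(2)] by blast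
          have "disjnt C1 C2" using S(3) C unfolding pairwise_def by blast
          moreover have "C1 \<in> G" "C2 \<in> G" using C S(1) unfolding Below_def by auto
          ultimately have "max (hi C1 $ 2) (hi C2 $ 2) \<in> Y" using Ymem by blast
          hence "\<delta> \<le> max (hi C1 $ 2) (hi C2 $ 2)" by (rule \<delta>le)
          moreover have "max (hi C1 $ 2) (hi C2 $ 2) < \<delta>" using C S(1) Below_def by auto
          ultimately show False by simp
        qed
      qed
      have tB: "tau Below \<le> enat 1"
      proof -
        have "tau Below \<le> 1" by (rule tau_le1) (use boxes nuB Below_def in \<open>auto simp: one_enat_def\<close>)
        thus ?thesis by (simp add: one_enat_def)
      qed
      have tM: "tau Mid \<le> enat 2"
      proof -
        let ?P = "{vector [\<alpha>, \<delta>], vector [\<beta>, \<delta>]} :: (real^2) set"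
        have "tau Mid \<le> enat (card ?P)"
        proof (rule tau_le)
          show "finite ?P" by simp
          fix B assume "B \<in> Mid"
          hence BG: "B \<in> G" and y: "lo B $ 2 \<le> \<delta>" "\<delta> \<le> hi B $ 2" unfolding Mid_def by auto
          have bx: "is_box B" using BG boxes by blast
          have "wall \<alpha> B \<or> wall \<beta> B" using BG hG by blast
          then show "?P \<inter> B \<noteq> {}"
          proof
            assume "wall \<alpha> B"
            hence "vector [\<alpha>, \<delta>] \<in> B" using y unfolding mem_box[OF bx] wall_def forall_2 vector_2 by simp
            thus ?thesis by blast
          next
            assume "wall \<beta> B"
            hence "vector [\<beta>, \<delta>] \<in> B" using y unfolding mem_box[OF bx] wall_def forall_2 vector_2 by simp
            thus ?thesis by blast
          qed
        qed
        moreover have "card ?P \<le> 2" by (simp add: card_insert_if)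
        ultimately show ?thesis by (meson enat_ord_simps(1) order_trans)
      qed
      have n2: "2 \<le> n" using n'2 n'n by simp
      have nuA: "nu Above \<le> enat (n - 2)"
      proof (rule nu_le)
        fix S assume S: "S \<subseteq> Above" "finite S" "pairwise disjnt S"
        show "card S \<le> n - 2"
        proof (cases "S = {}")
          case True then show ?thesis by simp
        next
          case False
          define z0 where "z0 = Min ((\<lambda>B. lo B $ 2) ` S)"
          have "\<forall>B\<in>S. \<delta> < lo B $ 2" using S(1) unfolding Above_def by blast
          hence "\<delta> < z0" unfolding z0_def using S(2) False by (simp add: Min_gr_iff)
          then obtain y where y: "y \<in> Y" "y < z0" using cInf_lessD[OF Yne] unfolding \<delta>_def by blast
          have "\<forall>B\<in>S. y < lo B $ 2"
          proof
            fix B assume "B \<in> S"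
            hence "z0 \<le> lo B $ 2" unfolding z0_def using S(2) by simp
            thus "y < lo B $ 2" using y(2) by simp
          qed
          hence "card S + 2 \<le> n'" using key[OF _ S(2,3) y(1)] S(1) Above_def by blast
          thus ?thesis using n'n by simp
        qed
      qed
      have hA: "\<forall>B\<in>Above. is_box B \<and> (wall \<alpha> B \<or> wall \<beta> B)" using hG Above_def by blast
      have tA: "tau Above \<le> enat (3 * (n - 2) div 2)"
        using less.IH[of "n - 2"] n2 hA nuA by auto
      have "G \<subseteq> Below \<union> Mid \<union> Above" unfolding Below_def Mid_def Above_def by auto
      hence "tau G \<le> tau (Below \<union> Mid \<union> Above)" by (rule tau_mono)
      also have "\<dots> \<le> tau (Below \<union> Mid) + tau Above" by (rule tau_union)
      also have "\<dots> \<le> (tau Below + tau Mid) + tau Above" by (rule add_right_mono[OF tau_union])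
      also have "\<dots> \<le> (enat 1 + enat 2) + enat (3 * (n - 2) div 2)"
        by (rule add_mono[OF add_mono[OF tB tM] tA])
      also have "\<dots> = enat (3 * n div 2)"
      proof -
        have "1 + 2 + 3 * (n - 2) div 2 = 3 * n div 2" using n2 by presburger
        thus ?thesis by simp
      qed
      finally show ?thesis .
    qed
  qed
qed



lemma nu_exact:
  assumes "finite K" "nu E \<le> enat j" "enat j \<le> nu (E \<union> K)"
  shows "\<exists>E'. E \<subseteq> E' \<and> E' \<subseteq> E \<union> K \<and> nu E' = enat j"
  using assms
proof (induction K rule: finite_induct)
  case empty
  then show ?case by (intro exI[of _ E]) (auto intro: antisym)
next
  case (insert x K)
  show ?case
  proof (cases "enat j \<le> nu (E \<union> K)")
    case True
    then obtain E' where "E \<subseteq> E'" "E' \<subseteq> E \<union> K" "nu E' = enat j"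
      using insert.IH insert.prems(1) by blast
    then show ?thesis by blast
  next
    case False
    hence lt: "nu (E \<union> K) < enat j" by simp
    have "nu (E \<union> insert x K) = nu (insert x (E \<union> K))" by simp
    also have "\<dots> \<le> nu (E \<union> K) + 1" by (rule nu_insert)
    also have "\<dots> \<le> enat j" using ileI1[OF lt] by (simp add: eSuc_plus_1)
    finally have "nu (E \<union> insert x K) \<le> enat j" .
    then show ?thesis using insert.prems(2) by (intro exI[of _ "E \<union> insert x K"]) (auto intro: antisym)
  qed
qed

lemma tau_le_f2:
  fixes F E :: "(real^2) set set"
  assumes boxes: "\<forall>B\<in>F. is_box B" and nuF: "nu F = enat n" and EF: "E \<subseteq> F"
    and nuE: "nu E \<le> enat j" and jn: "j \<le> n"
  shows "tau E \<le> f2 j"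
proof -
  obtain K where K: "K \<subseteq> F" "finite K" "pairwise disjnt K" "card K = n"
    using nu_attained[OF nuF] by blast
  have "enat n \<le> nu (E \<union> K)" using nu_ge[of K "E \<union> K"] K by auto
  moreover have "enat j \<le> enat n" using jn by simp
  ultimately have "enat j \<le> nu (E \<union> K)" by (rule order_trans[rotated])
  then obtain E' where E': "E \<subseteq> E'" "E' \<subseteq> E \<union> K" "nu E' = enat j"
    using nu_exact[OF K(2) nuE] by blast
  have E'box: "\<forall>B\<in>E'. is_box B" using E' EF K(1) boxes by blast
  have "tau E \<le> tau E'" by (rule tau_mono[OF E'(1)])
  also have "tau E' \<le> f2 j"
  proof (cases "j = 0")
    case True
    hence "nu E' \<le> 0" using E'(3) by (simp add: zero_enat_def)
    hence "E' = {}" using nu_zero_empty[OF E'box] by blast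
    then show ?thesis by (simp add: tau_empty)
  next
    case False
    then show ?thesis unfolding f_box_def using E'box E'(3) by (auto intro!: Sup_upper)
  qed
  finally show ?thesis .
qed

lemma card_Un_boxes:
  fixes S T :: "(real^2) set set"
  assumes "\<forall>B\<in>S. is_box B" "finite S" "finite T" "\<forall>B\<in>S. \<forall>B'\<in>T. disjnt B B'"
  shows "card (S \<union> T) = card S + card T"
proof -
  have "S \<inter> T = {}"
  proof (rule ccontr)
    assume "S \<inter> T \<noteq> {}" then obtain B where B: "B \<in> S" "B \<in> T" by blast
    hence "disjnt B B" using assms(4) by blast
    hence "B = {}" by (simp add: disjnt_def)
    moreover have "is_box B" using B(1) assms(1) by blast
    ultimately show False using box_ne by blast
  qed
  then show ?thesis by (rule card_Un_disjoint[OF assms(2,3)])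
qed

lemma main_bound:
  fixes F :: "(real^2) set set"
  assumes boxes: "\<forall>B\<in>F. is_box B" and nuF: "nu F = enat n" and klm: "k + l + m + 2 = n"
  shows "tau F \<le> f2 k + f2 l + f2 m + enat (3 * n div 2)"
proof -
  obtain K where K: "K \<subseteq> F" "finite K" "pairwise disjnt K" "card K = n"
    using nu_attained[OF nuF] by blast
  have Kne: "K \<noteq> {}" using K(4) klm by auto
  have nuge: "card S + card T \<le> n" if "S \<subseteq> F" "T \<subseteq> F" "finite S" "finite T"
    "pairwise disjnt S" "pairwise disjnt T" "\<forall>B\<in>S. \<forall>B'\<in>T. disjnt B B'" for S T
    using combine[OF boxes that] nuF by simp
  have bx: "is_box B" if "B \<in> F" for B using boxes that by blast
  define XA where "XA = {x. \<exists>S\<subseteq>F. finite S \<and> pairwise disjnt S \<and> card S = Suc k \<and> (\<forall>B\<in>S. hi B $ 1 \<le> x)}"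
  define XC where "XC = {x. \<exists>S\<subseteq>F. finite S \<and> pairwise disjnt S \<and> card S = Suc m \<and> (\<forall>B\<in>S. x \<le> lo B $ 1)}"
  have "Suc k \<le> card K" using K(4) klm by simp
  then obtain SA0 where SA0: "SA0 \<subseteq> K" "card SA0 = Suc k" "finite SA0"
    by (rule obtain_subset_with_card_n)
  have "\<forall>B\<in>SA0. hi B $ 1 \<le> Max ((\<lambda>B. hi B $ 1) ` SA0)"
    using SA0(3) by (intro ballI Max_ge) auto
  moreover have "SA0 \<subseteq> F" using SA0(1) K(1) by blast
  ultimately have "Max ((\<lambda>B. hi B $ 1) ` SA0) \<in> XA"
    unfolding XA_def using SA0(2,3) pairwise_subset[OF K(3) SA0(1)] by blast
  hence XAne: "XA \<noteq> {}" by blast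
  define y0 where "y0 = Min ((\<lambda>B. lo B $ 1) ` K)"
  have XAlb: "y0 \<le> x" if "x \<in> XA" for x
  proof (rule ccontr)
    assume "\<not> y0 \<le> x"
    hence lt: "x < y0" by simp
    have "\<exists>S. S \<subseteq> F \<and> finite S \<and> pairwise disjnt S \<and> card S = Suc k \<and> (\<forall>B\<in>S. hi B $ 1 \<le> x)"
      using that unfolding XA_def by simp
    then obtain S where S0: "S \<subseteq> F \<and> finite S \<and> pairwise disjnt S \<and> card S = Suc k \<and> (\<forall>B\<in>S. hi B $ 1 \<le> x)" ..
    have S: "S \<subseteq> F" "finite S" "pairwise disjnt S" "card S = Suc k" "\<forall>B\<in>S. hi B $ 1 \<le> x"
      using S0 by simp_all
    have "\<forall>B\<in>S. \<forall>B'\<in>K. disjnt B B'"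
    proof (intro ballI)
      fix B B' assume "B \<in> S" "B' \<in> K"
      have "y0 \<le> lo B' $ 1" unfolding y0_def by (rule Min_le) (use K(2) \<open>B' \<in> K\<close> in auto)
      moreover have "hi B $ 1 \<le> x" using S(5) \<open>B \<in> S\<close> by blast
      ultimately have hlt: "hi B $ 1 < lo B' $ 1" using lt by linarith
      have bx1: "is_box B" using bx S(1) \<open>B \<in> S\<close> by blast
      have bx2: "is_box B'" using bx K(1) \<open>B' \<in> K\<close> by blast
      show "disjnt B B'" by (rule box_disj[OF bx1 bx2 hlt])
    qed
    hence "card S + card K \<le> n" by (rule nuge[OF S(1) K(1) S(2) K(2) S(3) K(3)])
    thus False using S(4) K(4) by simp
  qed
  have bddA: "bdd_below XA" by (rule bdd_belowI[of _ y0], rule XAlb)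
  define \<alpha> where "\<alpha> = Inf XA"
  have "Suc m \<le> card K" using K(4) klm by simp
  then obtain SC0 where SC0: "SC0 \<subseteq> K" "card SC0 = Suc m" "finite SC0"
    by (rule obtain_subset_with_card_n)
  have "\<forall>B\<in>SC0. Min ((\<lambda>B. lo B $ 1) ` SC0) \<le> lo B $ 1"
    using SC0(3) by (intro ballI Min_le) auto
  moreover have "SC0 \<subseteq> F" using SC0(1) K(1) by blast
  ultimately have "Min ((\<lambda>B. lo B $ 1) ` SC0) \<in> XC"
    unfolding XC_def using SC0(2,3) pairwise_subset[OF K(3) SC0(1)] by blast
  hence XCne: "XC \<noteq> {}" by blast
  define y1 where "y1 = Max ((\<lambda>B. hi B $ 1) ` K)"
  have XCub: "x \<le> y1" if "x \<in> XC" for x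
  proof (rule ccontr)
    assume "\<not> x \<le> y1"
    hence lt: "y1 < x" by simp
    have "\<exists>S. S \<subseteq> F \<and> finite S \<and> pairwise disjnt S \<and> card S = Suc m \<and> (\<forall>B\<in>S. x \<le> lo B $ 1)"
      using that unfolding XC_def by simp
    then obtain S where S0: "S \<subseteq> F \<and> finite S \<and> pairwise disjnt S \<and> card S = Suc m \<and> (\<forall>B\<in>S. x \<le> lo B $ 1)" ..
    have S: "S \<subseteq> F" "finite S" "pairwise disjnt S" "card S = Suc m" "\<forall>B\<in>S. x \<le> lo B $ 1"
      using S0 by simp_all
    have "\<forall>B\<in>K. \<forall>B'\<in>S. disjnt B B'"
    proof (intro ballI)
      fix B B' assume "B \<in> K" "B' \<in> S"
      have "hi B $ 1 \<le> y1" unfolding y1_def by (rule Max_ge) (use K(2) \<open>B \<in> K\<close> in auto)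
      moreover have "x \<le> lo B' $ 1" using S(5) \<open>B' \<in> S\<close> by blast
      ultimately have hlt: "hi B $ 1 < lo B' $ 1" using lt by linarith
      have bx2: "is_box B'" using bx S(1) \<open>B' \<in> S\<close> by blast
      have bx1: "is_box B" using bx K(1) \<open>B \<in> K\<close> by blast
      show "disjnt B B'" by (rule box_disj[OF bx1 bx2 hlt])
    qed
    hence "card K + card S \<le> n" by (rule nuge[OF K(1) S(1) K(2) S(2) K(3) S(3)])
    thus False using S(4) K(4) by simp
  qed
  have bddC: "bdd_above XC" by (rule bdd_aboveI[of _ y1], rule XCub)
  define \<beta> where "\<beta> = Sup XC"
  define A where "A = {B\<in>F. hi B $ 1 < \<alpha>}"
  define C where "C = {B\<in>F. \<beta> < lo B $ 1}"
  define M where "M = {B\<in>F. \<alpha> < lo B $ 1 \<and> hi B $ 1 < \<beta>}"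
  define D where "D = {B\<in>F. wall \<alpha> B \<or> wall \<beta> B}"
  have nuA: "nu A \<le> enat k"
  proof (rule nu_le)
    fix S assume S: "S \<subseteq> A" "finite S" "pairwise disjnt S"
    show "card S \<le> k"
    proof (rule ccontr)
      assume "\<not> card S \<le> k"
      hence "Suc k \<le> card S" by simp
      then obtain S' where S': "S' \<subseteq> S" "card S' = Suc k" "finite S'"
        by (rule obtain_subset_with_card_n)
      have S'ne: "S' \<noteq> {}" using S'(2) by auto
      define x where "x = Max ((\<lambda>B. hi B $ 1) ` S')"
      have "\<forall>B\<in>S'. hi B $ 1 \<le> x" unfolding x_def using S'(3) by (intro ballI Max_ge) auto
      moreover have "S' \<subseteq> F" using S'(1) S(1) unfolding A_def by blast
      ultimately have "x \<in> XA"
        unfolding XA_def using S'(2,3) pairwise_subset[OF S(3) S'(1)] by blast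
      hence "\<alpha> \<le> x" unfolding \<alpha>_def by (rule cInf_lower[OF _ bddA])
      moreover have "x \<in> (\<lambda>B. hi B $ 1) ` S'" unfolding x_def using S'(3) S'ne by (intro Max_in) auto
      hence "x < \<alpha>" using S'(1) S(1) A_def by auto
      ultimately show False by simp
    qed
  qed
  have nuC: "nu C \<le> enat m"
  proof (rule nu_le)
    fix S assume S: "S \<subseteq> C" "finite S" "pairwise disjnt S"
    show "card S \<le> m"
    proof (rule ccontr)
      assume "\<not> card S \<le> m"
      hence "Suc m \<le> card S" by simp
      then obtain S' where S': "S' \<subseteq> S" "card S' = Suc m" "finite S'"
        by (rule obtain_subset_with_card_n)
      have S'ne: "S' \<noteq> {}" using S'(2) by auto
      define x where "x = Min ((\<lambda>B. lo B $ 1) ` S')"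
      have "\<forall>B\<in>S'. x \<le> lo B $ 1" unfolding x_def using S'(3) by (intro ballI Min_le) auto
      moreover have "S' \<subseteq> F" using S'(1) S(1) unfolding C_def by blast
      ultimately have "x \<in> XC"
        unfolding XC_def using S'(2,3) pairwise_subset[OF S(3) S'(1)] by blast
      hence "x \<le> \<beta>" unfolding \<beta>_def by (rule cSup_upper[OF _ bddC])
      moreover have "x \<in> (\<lambda>B. lo B $ 1) ` S'" unfolding x_def using S'(3) S'ne by (intro Min_in) auto
      hence "\<beta> < x" using S'(1) S(1) C_def by auto
      ultimately show False by simp
    qed
  qed
  have nuM: "nu M \<le> enat l"
  proof (rule nu_le)
    fix S assume S: "S \<subseteq> M" "finite S" "pairwise disjnt S"
    show "card S \<le> l"
    proof (cases "S = {}")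
      case True then show ?thesis by simp
    next
      case False
      define a0 where "a0 = Min ((\<lambda>B. lo B $ 1) ` S)"
      define b0 where "b0 = Max ((\<lambda>B. hi B $ 1) ` S)"
      have "\<forall>B\<in>S. \<alpha> < lo B $ 1" using S(1) unfolding M_def by blast
      hence "\<alpha> < a0" unfolding a0_def using S(2) False by (simp add: Min_gr_iff)
      then obtain x where x: "x \<in> XA" "x < a0" using cInf_lessD[OF XAne] unfolding \<alpha>_def by blast
      have "\<forall>B\<in>S. hi B $ 1 < \<beta>" using S(1) unfolding M_def by blast
      hence "b0 < \<beta>" unfolding b0_def using S(2) False by (simp add: Max_less_iff)
      then obtain y where y: "y \<in> XC" "b0 < y" using less_cSupD[OF XCne] unfolding \<beta>_def by blast
      have "\<exists>SA. SA \<subseteq> F \<and> finite SA \<and> pairwise disjnt SA \<and> card SA = Suc k \<and> (\<forall>B\<in>SA. hi B $ 1 \<le> x)"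
        using x(1) unfolding XA_def by simp
      then obtain SA where SA0: "SA \<subseteq> F \<and> finite SA \<and> pairwise disjnt SA \<and> card SA = Suc k \<and> (\<forall>B\<in>SA. hi B $ 1 \<le> x)" ..
      have SA: "SA \<subseteq> F" "finite SA" "pairwise disjnt SA" "card SA = Suc k" "\<forall>B\<in>SA. hi B $ 1 \<le> x"
        using SA0 by simp_all
      have "\<exists>SC. SC \<subseteq> F \<and> finite SC \<and> pairwise disjnt SC \<and> card SC = Suc m \<and> (\<forall>B\<in>SC. y \<le> lo B $ 1)"
        using y(1) unfolding XC_def by simp
      then obtain SC where SC0: "SC \<subseteq> F \<and> finite SC \<and> pairwise disjnt SC \<and> card SC = Suc m \<and> (\<forall>B\<in>SC. y \<le> lo B $ 1)" ..
      have SC: "SC \<subseteq> F" "finite SC" "pairwise disjnt SC" "card SC = Suc m" "\<forall>B\<in>SC. y \<le> lo B $ 1"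
        using SC0 by simp_all
      have SF: "S \<subseteq> F" using S(1) unfolding M_def by blast
      have loS: "a0 \<le> lo B $ 1" if "B \<in> S" for B unfolding a0_def by (rule Min_le) (use S(2) that in auto)
      have hiS: "hi B $ 1 \<le> b0" if "B \<in> S" for B unfolding b0_def by (rule Max_ge) (use S(2) that in auto)
      obtain B0 where B0: "B0 \<in> S" using False by blast
      have "B0 \<in> F" using B0 SF by blast
      hence "lo B0 $ 1 \<le> hi B0 $ 1" using box_lohi(1)[OF bx] by blast
      hence xy: "x < y" using x(2) y(2) loS[OF B0] hiS[OF B0] by linarith
      have c1: "\<forall>B\<in>SA. \<forall>B'\<in>S. disjnt B B'"
      proof (intro ballI)
        fix B B' assume "B \<in> SA" "B' \<in> S"
        have "hi B $ 1 \<le> x" using SA(5) \<open>B \<in> SA\<close> by blast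
        hence hlt: "hi B $ 1 < lo B' $ 1" using loS[OF \<open>B' \<in> S\<close>] x(2) by linarith
        have bx1: "is_box B" using bx SA(1) \<open>B \<in> SA\<close> by blast
        have bx2: "is_box B'" using bx SF \<open>B' \<in> S\<close> by blast
        show "disjnt B B'" by (rule box_disj[OF bx1 bx2 hlt])
      qed
      have c2: "\<forall>B\<in>SA \<union> S. \<forall>B'\<in>SC. disjnt B B'"
      proof (intro ballI)
        fix B B' assume "B \<in> SA \<union> S" "B' \<in> SC"
        have hlt: "hi B $ 1 < lo B' $ 1"
        proof (cases "B \<in> SA")
          case True
          have "hi B $ 1 \<le> x" using SA(5) True by blast
          moreover have "y \<le> lo B' $ 1" using SC(5) \<open>B' \<in> SC\<close> by blast
          ultimately show ?thesis using xy by linarith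
        next
          case False
          hence "B \<in> S" using \<open>B \<in> SA \<union> S\<close> by blast
          hence "hi B $ 1 \<le> b0" by (rule hiS)
          moreover have "y \<le> lo B' $ 1" using SC(5) \<open>B' \<in> SC\<close> by blast
          ultimately show ?thesis using y(2) by linarith
        qed
        have bx1: "is_box B" using bx SA(1) SF \<open>B \<in> SA \<union> S\<close> by blast
        have bx2: "is_box B'" using bx SC(1) \<open>B' \<in> SC\<close> by blast
        show "disjnt B B'" by (rule box_disj[OF bx1 bx2 hlt])
      qed
      have cardU: "card (SA \<union> S) = card SA + card S"
        by (rule card_Un_boxes) (use bx SA(1) SA(2) S(2) c1 in auto)
      have pwU: "pairwise disjnt (SA \<union> S)" by (rule pairwise_disjnt_Un[OF SA(3) S(3) c1])
      have "card (SA \<union> S) + card SC \<le> n"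
        by (rule nuge) (use SA SF SC S(2) pwU c2 in auto)
      then show ?thesis using cardU SA(4) SC(4) klm by simp
    qed
  qed
  have cover: "F \<subseteq> A \<union> M \<union> C \<union> D"
  proof
    fix B assume "B \<in> F"
    show "B \<in> A \<union> M \<union> C \<union> D"
    proof (cases "B \<in> A \<or> B \<in> M \<or> B \<in> C")
      case True then show ?thesis by blast
    next
      case False
      hence "\<not> hi B $ 1 < \<alpha>" "\<not> \<beta> < lo B $ 1" "\<not> (\<alpha> < lo B $ 1 \<and> hi B $ 1 < \<beta>)"
        using \<open>B \<in> F\<close> unfolding A_def M_def C_def by auto
      hence "wall \<alpha> B \<or> wall \<beta> B" unfolding wall_def by linarith
      then show ?thesis using \<open>B \<in> F\<close> unfolding D_def by blast
    qed
  qed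
  have tD: "tau D \<le> enat (3 * n div 2)"
  proof -
    have "nu D \<le> nu F" by (rule nu_mono) (auto simp: D_def)
    hence "nu D \<le> enat n" using nuF by simp
    moreover have "\<forall>B\<in>D. is_box B \<and> (wall \<alpha> B \<or> wall \<beta> B)" using boxes unfolding D_def by blast
    ultimately show ?thesis using two_wall[of \<alpha> \<beta> n, rule_format, of D] by blast
  qed
  have tA: "tau A \<le> f2 k" by (rule tau_le_f2[OF boxes nuF _ nuA]) (use klm in \<open>auto simp: A_def\<close>)
  have tM: "tau M \<le> f2 l" by (rule tau_le_f2[OF boxes nuF _ nuM]) (use klm in \<open>auto simp: M_def\<close>)
  have tC: "tau C \<le> f2 m" by (rule tau_le_f2[OF boxes nuF _ nuC]) (use klm in \<open>auto simp: C_def\<close>)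
  have "tau F \<le> tau (A \<union> M \<union> C \<union> D)" by (rule tau_mono[OF cover])
  also have "\<dots> \<le> tau (A \<union> M \<union> C) + tau D" by (rule tau_union)
  also have "\<dots> \<le> (tau (A \<union> M) + tau C) + tau D" by (rule add_right_mono[OF tau_union])
  also have "\<dots> \<le> ((tau A + tau M) + tau C) + tau D" by (rule add_right_mono[OF add_right_mono[OF tau_union]])
  also have "\<dots> \<le> f2 k + f2 l + f2 m + enat (3 * n div 2)"
    by (rule add_mono[OF add_mono[OF add_mono[OF tA tM] tC] tD])
  finally show ?thesis .
qed

theorem proposition2:
  fixes n :: nat
  assumes "n \<ge> 2"
  shows "\<forall>k l m. k + l + m = n - 2 \<longrightarrow>
           f2 n \<le> f2 k + f2 l + f2 m + enat (3 * n div 2)"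
proof (intro allI impI)
  fix k l m assume h: "k + l + m = n - 2"
  have n0: "n \<noteq> 0" using assms by simp
  have eq: "f2 n = Sup {tau F | F :: (real^2) set set. (\<forall>B\<in>F. is_box B) \<and> nu F = enat n}"
    unfolding f_box_def using n0 by simp
  have klm: "k + l + m + 2 = n" using h assms by simp
  show "f2 n \<le> f2 k + f2 l + f2 m + enat (3 * n div 2)"
    unfolding eq
  proof (rule Sup_least)
    fix x assume "x \<in> {tau F | F :: (real^2) set set. (\<forall>B\<in>F. is_box B) \<and> nu F = enat n}"
    then obtain F :: "(real^2) set set" where F: "x = tau F" "\<forall>B\<in>F. is_box B" "nu F = enat n" by blast
    show "x \<le> f2 k + f2 l + f2 m + enat (3 * n div 2)"
      unfolding F(1) by (rule main_bound[OF F(2) F(3) klm])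
  qed
qed


end
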